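(* Let $n\ge3$, $2\le i\le n-1$, $\mathfrak g=\mathfrak{sp}(n,\mathbb C)$, $\mathfrak q$ of type $C_n(i)$, $\mu=\varepsilon_1+\varepsilon_{i+1}$, $\epsilon_\gamma=\varepsilon_2-\varepsilon_{i+1}$. Then $\mathrm{pr}_{\mathfrak l_\gamma\otimes\mathfrak z(\mathfrak n)}(\tau_2(X_\mu+X_{\epsilon_\gamma}))$ is a highest weight vector for $V(\mu+\epsilon_\gamma)$, the irreducible $\mathfrak l$-submodule of $\mathfrak l_\gamma\otimes\mathfrak z(\mathfrak n)$ with highest weight $\mu+\epsilon_\gamma=\varepsilon_1+\varepsilon_2$.
   Context: $\mathfrak g=\mathfrak{sp}(n,\mathbb C)\subset\mathfrak{gl}(2n,\mathbb C)$; $\hat j=j+n$, $E_{ab}$ matrix units. Cartan $\mathfrak h$ = matrices $\sum_j h_j(E_{jj}-E_{\hat j\hat j})$, $\varepsilon_j$ picks $h_j$. Roots $\pm\varepsilon_j\pm\varepsilon_k$ ($j<k$), $\pm2\varepsilon_j$; positive system with simple roots $\alpha_j=\varepsilon_j-\varepsilon_{j+1}$ ($j<n$), $\alpha_n=2\varepsilon_n$. Root vectors: $X_{\varepsilon_j-\varepsilon_k}=E_{jk}-E_{\hat k\hat j}$ ($j\ne k$), $X_{\varepsilon_j+\varepsilon_k}=E_{j\hat k}+E_{k\hat j}$, $X_{-(\varepsilon_j+\varepsilon_k)}=E_{\hat jk}+E_{\hat kj}$, $X_{2\varepsilon_j}=E_{j\hat j}$, $X_{-2\varepsilon_j}=E_{\hat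 jj}$. Killing form $\kappa=c_0\mathrm{Tr}(XY)$, $c_0>0$. $\mathfrak q=\mathfrak l\oplus\mathfrak n$ is the standard maximal parabolic subalgebra determined by $\alpha_i$; grading $\mathfrak g=\bigoplus_{j=-2}^2\mathfrak g(j)$ by the $\alpha_i$-coefficient, $\mathfrak l=\mathfrak g(0)$, $\Delta(\mathfrak g(1))=\{\varepsilon_j\pm\varepsilon_k:1\le j\le i<k\le n\}$, $\mathfrak z(\mathfrak n)=\mathfrak g(2)$ with roots $\varepsilon_j+\varepsilon_k$ ($j<k\le i$), $2\varepsilon_j$ ($j\le i$). $\mathfrak l=\mathfrak z(\mathfrak l)\oplus\mathfrak l_\gamma\oplus\mathfrak l_{n\gamma}$ with $\mathfrak l_\gamma\cong\mathfrak{sl}(i,\mathbb C)$ (simple roots $\alpha_1,\dots,\alpha_{i-1}$) and $\mathfrak l_{n\gamma}\cong\mathfrak{sp}(n-i,\mathbb C)$ (simple roots $\alpha_{i+1},\dots,\alpha_n$); $\mathrm{pr}_{\mathfrak l_\gamma\otimes\mathfrak z(\mathfrak n)}$ is the projection of $\mathfrak l\otimes\mathfrak z(\mathfrak n)$ onto $\mathfrak l_\gamma\otimes\mathfrak z(\mathfrak n)$ along this decomposition; $\mathfrak l$ acts on tensor products by the usual tensor product action. Highest weight vector means a weight vector of weight $\mu+\epsilon_\gamma$ annihilated by all $X_\alpha$, $\alpha\in\Pi\setminus\{\alpha_i\}$. $\omega=\frac1{c_0}\sum_{j=1}^iX_{-2\varepsilon_j}\otimes X_{2\varepsilon_j}+\frac1{2c_0}\sum_{1\le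 j<k\le i}X_{-(\varepsilon_j+\varepsilon_k)}\otimes X_{\varepsilon_j+\varepsilon_k}$ and $\tau_2(X)=\tfrac12(\mathrm{ad}(X)^2\otimes\mathrm{Id})\omega$ for $X\in\mathfrak g(1)$. *)

theory Defs
  imports Complex_Main
begin

text \<open>Matrices in gl(2n,C) are functions cmat, with rows/columns
indexed by 1..2n; the hat of j is j+n. A tensor in gl(2n)\<otimes>gl(2n) is represented by its
coefficient array: T a b c d is the coefficient of E_ab \<otimes> E_cd.\<close>

type_synonym cmat = "nat \<Rightarrow> nat \<Rightarrow> complex"
type_synonym ctens = "nat \<Rightarrow> nat \<Rightarrow> nat \<Rightarrow> nat \<Rightarrow> complex"

definition mmul :: "nat \<Rightarrow> cmat \<Rightarrow> cmat \<Rightarrow> cmat" where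
  "mmul n A B = (\<lambda>a b. \<Sum>c\<in>{1..2*n}. A a c * B c b)"

definition madd :: "cmat \<Rightarrow> cmat \<Rightarrow> cmat" where
  "madd A B = (\<lambda>a b. A a b + B a b)"

definition msub :: "cmat \<Rightarrow> cmat \<Rightarrow> cmat" where
  "msub A B = (\<lambda>a b. A a b - B a b)"

definition Eunit :: "nat \<Rightarrow> nat \<Rightarrow> cmat" where
  "Eunit a b = (\<lambda>p q. if p = a \<and> q = b then 1 else 0)"

definition ad :: "nat \<Rightarrow> cmat \<Rightarrow> cmat \<Rightarrow> cmat" where
  "ad n X Y = msub (mmul n X Y) (mmul n Y X)"

definition Xdiff :: "nat \<Rightarrow> nat \<Rightarrow> nat \<Rightarrow> cmat" where
  "Xdiff n j k = msub (Eunit j k) (Eunit (k+n) (j+n))"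
definition Xsum :: "nat \<Rightarrow> nat \<Rightarrow> nat \<Rightarrow> cmat" where
  "Xsum n j k = madd (Eunit j (k+n)) (Eunit k (j+n))"
definition Xnegsum :: "nat \<Rightarrow> nat \<Rightarrow> nat \<Rightarrow> cmat" where
  "Xnegsum n j k = madd (Eunit (j+n) k) (Eunit (k+n) j)"
definition X2eps :: "nat \<Rightarrow> nat \<Rightarrow> cmat" where
  "X2eps n j = Eunit j (j+n)"
definition Xneg2eps :: "nat \<Rightarrow> nat \<Rightarrow> cmat" where
  "Xneg2eps n j = Eunit (j+n) j"

definition simple_rv :: "nat \<Rightarrow> nat \<Rightarrow> cmat" where
  "simple_rv n j = (if j < n then Xdiff n j (j+1) else X2eps n j)"

definition Hcart :: "nat \<Rightarrow> (nat \<Rightarrow> complex) \<Rightarrow> cmat" where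
  "Hcart n h = (\<lambda>p q. if p = q \<and> p \<in> {1..n} then h p
                      else if p = q \<and> p \<in> {n+1..2*n} then - h (p - n) else 0)"

definition tens :: "cmat \<Rightarrow> cmat \<Rightarrow> ctens" where
  "tens X Y = (\<lambda>a b c d. X a b * Y c d)"

text \<open>(f \<otimes> Id) T and (Id \<otimes> f) T for a linear map f on gl(2n).\<close>
definition map_left :: "nat \<Rightarrow> (cmat \<Rightarrow> cmat) \<Rightarrow> ctens \<Rightarrow> ctens" where
  "map_left n f T = (\<lambda>a b c d. \<Sum>p\<in>{1..2*n}. \<Sum>q\<in>{1..2*n}. T p q c d * f (Eunit p q) a b)"
definition map_right :: "nat \<Rightarrow> (cmat \<Rightarrow> cmat) \<Rightarrow> ctens \<Rightarrow> ctens" where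
  "map_right n f T = (\<lambda>a b c d. \<Sum>p\<in>{1..2*n}. \<Sum>q\<in>{1..2*n}. T a b p q * f (Eunit p q) c d)"

definition lact :: "nat \<Rightarrow> cmat \<Rightarrow> ctens \<Rightarrow> ctens" where
  "lact n Y T = (\<lambda>a b c d. map_left n (ad n Y) T a b c d + map_right n (ad n Y) T a b c d)"

text \<open>omega, with Killing form normalisation constant c0.\<close>
definition omega :: "nat \<Rightarrow> nat \<Rightarrow> real \<Rightarrow> ctens" where
  "omega n i c0 = (\<lambda>a b c d.
      (1 / complex_of_real c0) * (\<Sum>j\<in>{1..i}. tens (Xneg2eps n j) (X2eps n j) a b c d)
    + (1 / (2 * complex_of_real c0)) *
        (\<Sum>j\<in>{1..i}. \<Sum>k\<in>{j<..i}. tens (Xnegsum n j k) (Xsum n j k) a b c d))"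

definition tau2 :: "nat \<Rightarrow> nat \<Rightarrow> real \<Rightarrow> cmat \<Rightarrow> ctens" where
  "tau2 n i c0 X = (\<lambda>a b c d. (1/2) * map_left n (\<lambda>Y. ad n X (ad n X Y)) (omega n i c0) a b c d)"

text \<open>Projection of l = z(l) \<oplus> l_gamma \<oplus> l_ngamma onto l_gamma = sl(i) (indices 1..i and their
hats). On X in l: keep the sl(i)-block, removing the z(l)-component (1/i)(sum_{j\<le>i} h_j)
sum_{j\<le>i} (E_jj - E_{hat j hat j}), and kill the sp(n-i)-block.\<close>
definition pr_lgamma :: "nat \<Rightarrow> nat \<Rightarrow> cmat \<Rightarrow> cmat" where
  "pr_lgamma n i X = (\<lambda>a b.
     let avg = (\<Sum>j\<in>{1..i}. X j j) / of_nat i in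
     if a \<in> {1..i} \<and> b \<in> {1..i} then X a b - (if a = b then avg else 0)
     else if a \<in> {n+1..n+i} \<and> b \<in> {n+1..n+i} then X a b + (if a = b then avg else 0)
     else 0)"

definition pr_tens :: "nat \<Rightarrow> nat \<Rightarrow> ctens \<Rightarrow> ctens" where
  "pr_tens n i T = map_left n (pr_lgamma n i) T"

end

theory Submission
  imports Defs
begin

abbreviation RR :: "nat \<Rightarrow> nat set" where "RR n \<equiv> {1..2*n}"

definition supp :: "nat \<Rightarrow> cmat \<Rightarrow> bool" where
  "supp n M \<longleftrightarrow> (\<forall>a b. M a b \<noteq> 0 \<longrightarrow> a \<in> RR n \<and> b \<in> RR n)"

definition lin :: "nat \<Rightarrow> (cmat \<Rightarrow> cmat) \<Rightarrow> bool" where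
  "lin n f \<longleftrightarrow> (\<forall>M. supp n M \<longrightarrow> f M = (\<lambda>a b. \<Sum>p\<in>RR n. \<Sum>q\<in>RR n. M p q * f (Eunit p q) a b))"

lemma ifm[simp]: "(if P then 1 else 0) * (x::complex) = (if P then x else 0)"
  "x * (if P then 1 else 0) = (if P then x else 0)" by simp_all

lemma sum_E_l: "(\<Sum>c\<in>RR n. Eunit x y a c * f c) = (if a = x \<and> y \<in> RR n then f y else 0)"
  by (cases "a = x") (simp_all add: Eunit_def sum.delta)

lemma sum_E_r: "(\<Sum>c\<in>RR n. f c * Eunit x y c b) = (if b = y \<and> x \<in> RR n then f x else 0)"
  by (cases "b = y") (simp_all add: Eunit_def sum.delta')

lemma map_left_tens:
  assumes "lin n f" "supp n A"
  shows "map_left n f (tens A B) = tens (f A) B"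
proof -
  have "f A = (\<lambda>a b. \<Sum>p\<in>RR n. \<Sum>q\<in>RR n. A p q * f (Eunit p q) a b)" using assms unfolding lin_def by blast
  then show ?thesis unfolding map_left_def tens_def
    by (simp add: sum_distrib_left mult_ac)
qed

lemma mult_if_r: "(x::complex) * (if P then y else 0) = (if P then x * y else 0)" by simp
lemma mult_if_l: "(if P then y else 0) * (x::complex) = (if P then y * x else 0)" by simp

lemma sum_if_const: "(\<Sum>q\<in>S. if P then f q else 0) = (if P then (\<Sum>q\<in>S. f q) else (0::complex))"
  by simp

lemma ad_E: "p \<in> RR n \<Longrightarrow> q \<in> RR n \<Longrightarrow>
  ad n X (Eunit p q) = (\<lambda>a b. (if b = q then X a p else 0) - (if a = p then X q b else 0))"
  unfolding ad_def msub_def mmul_def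
  by (intro ext, simp only: sum_E_l sum_E_r, simp)

lemma supp_D: "supp n M \<Longrightarrow> a \<notin> RR n \<or> b \<notin> RR n \<Longrightarrow> M a b = 0"
  unfolding supp_def by blast

lemma lin_ad: "lin n (ad n X)"
  unfolding lin_def
proof (intro allI impI ext)
  fix M a b assume sM: "supp n M"
  have e1: "(\<Sum>p\<in>RR n. \<Sum>q\<in>RR n. M p q * (if b = q then X a p else 0)) = (\<Sum>c\<in>RR n. X a c * M c b)"
  proof (cases "b \<in> RR n")
    case True then show ?thesis by (simp add: mult_if_r sum.delta mult.commute)
  next
    case False then show ?thesis using supp_D[OF sM] by (auto simp add: mult_if_r)
  qed
  have e2: "(\<Sum>p\<in>RR n. \<Sum>q\<in>RR n. M p q * (if a = p then X q b else 0)) = (\<Sum>c\<in>RR n. M a c * X c b)"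
  proof (cases "a \<in> RR n")
    case True then show ?thesis by (simp add: mult_if_r sum_if_const sum.delta)
  next
    case False then show ?thesis using supp_D[OF sM] by (auto simp add: mult_if_r)
  qed
  have "(\<Sum>p\<in>RR n. \<Sum>q\<in>RR n. M p q * ad n X (Eunit p q) a b) =
     (\<Sum>p\<in>RR n. \<Sum>q\<in>RR n. M p q * (if b = q then X a p else 0)) - (\<Sum>p\<in>RR n. \<Sum>q\<in>RR n. M p q * (if a = p then X q b else 0))"
    by (simp add: ad_E right_diff_distrib sum_subtractf del: atLeastAtMost_iff)
  also have "\<dots> = ad n X M a b" unfolding e1 e2 by (simp add: ad_def msub_def mmul_def)
  finally show "ad n X M a b = (\<Sum>p\<in>RR n. \<Sum>q\<in>RR n. M p q * ad n X (Eunit p q) a b)" by simp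
qed

lemma supp_E: "p \<in> RR n \<Longrightarrow> q \<in> RR n \<Longrightarrow> supp n (Eunit p q)"
  unfolding supp_def Eunit_def by auto

lemma supp_ad: "supp n X \<Longrightarrow> supp n M \<Longrightarrow> supp n (ad n X M)"
proof -
  assume sX: "supp n X" and sM: "supp n M"
  have "\<And>a b. a \<notin> RR n \<or> b \<notin> RR n \<Longrightarrow> ad n X M a b = 0"
    using supp_D[OF sX] supp_D[OF sM] by (auto simp add: ad_def msub_def mmul_def)
  then show ?thesis unfolding supp_def by blast
qed

lemma swap4: "(\<Sum>r\<in>A. \<Sum>s\<in>B. \<Sum>p\<in>C. \<Sum>q\<in>D. h r s p q) = (\<Sum>p\<in>C. \<Sum>q\<in>D. \<Sum>r\<in>A. \<Sum>s\<in>B. (h r s p q :: complex))"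
proof -
  have inner: "(\<Sum>s\<in>B. \<Sum>p\<in>C. \<Sum>q\<in>D. h r s p q) = (\<Sum>p\<in>C. \<Sum>q\<in>D. \<Sum>s\<in>B. h r s p q)" for r
  proof -
    have "(\<Sum>s\<in>B. \<Sum>p\<in>C. \<Sum>q\<in>D. h r s p q) = (\<Sum>p\<in>C. \<Sum>s\<in>B. \<Sum>q\<in>D. h r s p q)" by (rule sum.swap)
    also have "\<dots> = (\<Sum>p\<in>C. \<Sum>q\<in>D. \<Sum>s\<in>B. h r s p q)" by (rule sum.cong[OF refl], rule sum.swap)
    finally show ?thesis .
  qed
  have "(\<Sum>r\<in>A. \<Sum>s\<in>B. \<Sum>p\<in>C. \<Sum>q\<in>D. h r s p q) = (\<Sum>r\<in>A. \<Sum>p\<in>C. \<Sum>q\<in>D. \<Sum>s\<in>B. h r s p q)"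
    by (simp only: inner)
  also have "\<dots> = (\<Sum>p\<in>C. \<Sum>r\<in>A. \<Sum>q\<in>D. \<Sum>s\<in>B. h r s p q)" by (rule sum.swap)
  also have "\<dots> = (\<Sum>p\<in>C. \<Sum>q\<in>D. \<Sum>r\<in>A. \<Sum>s\<in>B. h r s p q)" by (rule sum.cong[OF refl], rule sum.swap)
  finally show ?thesis .
qed

lemma linD: "lin n f \<Longrightarrow> supp n M \<Longrightarrow> f M a b = (\<Sum>p\<in>RR n. \<Sum>q\<in>RR n. M p q * f (Eunit p q) a b)"
  unfolding lin_def by simp

lemma lin_comp:
  assumes f: "lin n f" and g: "lin n g" and sg: "\<And>M. supp n M \<Longrightarrow> supp n (g M)"
  shows "lin n (\<lambda>M. f (g M))"
  unfolding lin_def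
proof (intro allI impI ext)
  fix M a b assume sM: "supp n M"
  have gE: "f (g (Eunit p q)) a b = (\<Sum>r\<in>RR n. \<Sum>s\<in>RR n. g (Eunit p q) r s * f (Eunit r s) a b)"
    if "p \<in> RR n" "q \<in> RR n" for p q
    by (rule linD[OF f sg[OF supp_E[OF that]]])
  have "f (g M) a b = (\<Sum>r\<in>RR n. \<Sum>s\<in>RR n. g M r s * f (Eunit r s) a b)"
    by (rule linD[OF f sg[OF sM]])
  also have "\<dots> = (\<Sum>r\<in>RR n. \<Sum>s\<in>RR n. (\<Sum>p\<in>RR n. \<Sum>q\<in>RR n. M p q * g (Eunit p q) r s) * f (Eunit r s) a b)"
    by (simp only: linD[OF g sM])
  also have "\<dots> = (\<Sum>p\<in>RR n. \<Sum>q\<in>RR n. M p q * (\<Sum>r\<in>RR n. \<Sum>s\<in>RR n. g (Eunit p q) r s * f (Eunit r s) a b))"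
    unfolding sum_distrib_left sum_distrib_right mult.assoc by (rule swap4)
  also have "\<dots> = (\<Sum>p\<in>RR n. \<Sum>q\<in>RR n. M p q * f (g (Eunit p q)) a b)"
    by (rule sum.cong[OF refl], rule sum.cong[OF refl], simp only: gE)
  finally show "f (g M) a b = (\<Sum>p\<in>RR n. \<Sum>q\<in>RR n. M p q * f (g (Eunit p q)) a b)" .
qed

lemma if_conj0: "(if P \<and> Q then x else 0) = (if P then (if Q then x else 0) else (0::complex))" by simp

lemma sumE_expand: "supp n M \<Longrightarrow> (\<Sum>p\<in>RR n. \<Sum>q\<in>RR n. M p q * Eunit p q a b) = M a b"
proof -
  assume sM: "supp n M"
  show ?thesis
  proof (cases "a \<in> RR n \<and> b \<in> RR n")
    case True
    then show ?thesis by (simp add: Eunit_def mult_if_r if_conj0 sum_if_const sum.delta)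
  next
    case False
    then show ?thesis using supp_D[OF sM] by (auto simp add: Eunit_def mult_if_r if_conj0 sum_if_const sum.delta)
  qed
qed

lemma sumE_diag: "i \<le> n \<Longrightarrow> (\<Sum>p\<in>RR n. \<Sum>q\<in>RR n. M p q * (\<Sum>j\<in>{1..i}. Eunit p q j j)) = (\<Sum>j\<in>{1..i}. M j j)"
proof -
  assume "i \<le> n"
  have "(\<Sum>p\<in>RR n. \<Sum>q\<in>RR n. M p q * (\<Sum>j\<in>{1..i}. Eunit p q j j))
      = (\<Sum>j\<in>{1..i}. \<Sum>p\<in>RR n. \<Sum>q\<in>RR n. M p q * Eunit p q j j)"
    by (simp only: sum_distrib_left, subst sum.swap, rule sum.cong[OF refl], rule sum.swap)
  also have "\<dots> = (\<Sum>j\<in>{1..i}. M j j)"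
    using \<open>i \<le> n\<close> by (intro sum.cong refl, simp add: Eunit_def mult_if_r if_conj0 sum_if_const sum.delta)
  finally show ?thesis .
qed

lemma lin_pr: "i \<le> n \<Longrightarrow> lin n (pr_lgamma n i)"
  unfolding lin_def
proof (intro allI impI ext)
  fix M a b assume iN: "i \<le> n" and sM: "supp n M"
  let ?A = "a \<in> {1..i} \<and> b \<in> {1..i}"
  let ?B = "a \<in> {n+1..n+i} \<and> b \<in> {n+1..n+i}"
  have pE: "pr_lgamma n i (Eunit p q) a b = (if ?A then Eunit p q a b - (if a = b then (\<Sum>j\<in>{1..i}. Eunit p q j j) / of_nat i else 0)
      else if ?B then Eunit p q a b + (if a = b then (\<Sum>j\<in>{1..i}. Eunit p q j j) / of_nat i else 0) else 0)" for p q
    unfolding pr_lgamma_def Let_def by simp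
  have pM: "pr_lgamma n i M a b = (if ?A then M a b - (if a = b then (\<Sum>j\<in>{1..i}. M j j) / of_nat i else 0)
      else if ?B then M a b + (if a = b then (\<Sum>j\<in>{1..i}. M j j) / of_nat i else 0) else 0)"
    unfolding pr_lgamma_def Let_def by simp
  have S1: "\<And>a b. (\<Sum>p\<in>RR n. \<Sum>q\<in>RR n. M p q * Eunit p q a b) = M a b" by (rule sumE_expand[OF sM])
  have S2: "(\<Sum>p\<in>RR n. \<Sum>q\<in>RR n. M p q * ((\<Sum>j\<in>{1..i}. Eunit p q j j) / of_nat i)) = (\<Sum>j\<in>{1..i}. M j j) / of_nat i"
  proof -
    have "(\<Sum>p\<in>RR n. \<Sum>q\<in>RR n. M p q * ((\<Sum>j\<in>{1..i}. Eunit p q j j) / of_nat i)) =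
      (\<Sum>p\<in>RR n. \<Sum>q\<in>RR n. M p q * (\<Sum>j\<in>{1..i}. Eunit p q j j)) / of_nat i"
      by (simp only: divide_inverse sum_distrib_right mult.assoc)
    then show ?thesis by (simp only: sumE_diag[OF iN])
  qed
  show "pr_lgamma n i M a b = (\<Sum>p\<in>RR n. \<Sum>q\<in>RR n. M p q * pr_lgamma n i (Eunit p q) a b)"
  proof (cases ?A)
    case True
    then show ?thesis unfolding pE pM
      by (cases "a = b", simp_all only: if_True if_False True simp_thms right_diff_distrib sum_subtractf S1 S2 mult_zero_right diff_zero sum.neutral_const)
  next
    case nA: False
    show ?thesis
    proof (cases ?B)
      case True
      then show ?thesis using nA unfolding pE pM
        by (cases "a = b", simp_all only: if_True if_False True nA simp_thms distrib_left sum.distrib S1 S2 mult_zero_right add_0_right sum.neutral_const)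
    next
      case False
      then show ?thesis unfolding pE pM by (simp only: nA False if_False mult_zero_right sum.neutral_const)
    qed
  qed
qed
lemma ml_add: "map_left n f (\<lambda>a b c d. S a b c d + T a b c d) = (\<lambda>a b c d. map_left n f S a b c d + map_left n f T a b c d)"
  by (simp add: map_left_def distrib_right sum.distrib)

lemma ml_smult: "map_left n f (\<lambda>a b c d. k * S a b c d) = (\<lambda>a b c d. k * map_left n f S a b c d)"
  by (simp add: map_left_def sum_distrib_left mult.assoc)

lemma ml_sum: "map_left n f (\<lambda>a b c d. \<Sum>j\<in>J. S j a b c d) = (\<lambda>a b c d. \<Sum>j\<in>J. map_left n f (S j) a b c d)"
proof (intro ext)
  fix a b c d
  have "map_left n f (\<lambda>a b c d. \<Sum>j\<in>J. S j a b c d) a b c d = (\<Sum>p\<in>RR n. \<Sum>q\<in>RR n. \<Sum>j\<in>J. S j p q c d * f (Eunit p q) a b)"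
    by (simp add: map_left_def sum_distrib_right)
  also have "\<dots> = (\<Sum>p\<in>RR n. \<Sum>j\<in>J. \<Sum>q\<in>RR n. S j p q c d * f (Eunit p q) a b)"
    by (rule sum.cong[OF refl], rule sum.swap)
  also have "\<dots> = (\<Sum>j\<in>J. \<Sum>p\<in>RR n. \<Sum>q\<in>RR n. S j p q c d * f (Eunit p q) a b)"
    by (rule sum.swap)
  finally show "map_left n f (\<lambda>a b c d. \<Sum>j\<in>J. S j a b c d) a b c d = (\<Sum>j\<in>J. map_left n f (S j) a b c d)"
    by (simp add: map_left_def)
qed

lemma ml_comp:
  assumes f: "lin n f" and sg: "\<And>p q. p \<in> RR n \<Longrightarrow> q \<in> RR n \<Longrightarrow> supp n (g (Eunit p q))"
  shows "map_left n f (map_left n g T) = map_left n (\<lambda>M. f (g M)) T"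
proof (intro ext)
  fix a b c d
  have "map_left n f (map_left n g T) a b c d = (\<Sum>p\<in>RR n. \<Sum>q\<in>RR n. (\<Sum>r\<in>RR n. \<Sum>s\<in>RR n. T r s c d * g (Eunit r s) p q) * f (Eunit p q) a b)"
    by (simp add: map_left_def)
  also have "\<dots> = (\<Sum>r\<in>RR n. \<Sum>s\<in>RR n. T r s c d * (\<Sum>p\<in>RR n. \<Sum>q\<in>RR n. g (Eunit r s) p q * f (Eunit p q) a b))"
    unfolding sum_distrib_left sum_distrib_right mult.assoc by (rule swap4)
  also have "\<dots> = (\<Sum>r\<in>RR n. \<Sum>s\<in>RR n. T r s c d * f (g (Eunit r s)) a b)"
    by (rule sum.cong[OF refl], rule sum.cong[OF refl], simp only: linD[OF f sg])
  finally show "map_left n f (map_left n g T) a b c d = map_left n (\<lambda>M. f (g M)) T a b c d"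
    by (simp add: map_left_def)
qed

definition XX :: "nat \<Rightarrow> nat \<Rightarrow> cmat" where "XX n i = madd (Xsum n 1 (i+1)) (Xdiff n 2 (i+1))"

lemma adX_pt: assumes "1 \<le> i" "i + 1 \<le> n"
  shows "ad n (XX n i) M a b =
    (if a = 1 then M (i+1+n) b else 0) + (if a = i+1 then M (1+n) b else 0) + (if a = 2 then M (i+1) b else 0) - (if a = i+1+n then M (2+n) b else 0)
   - ((if b = i+1+n then M a 1 else 0) + (if b = 1+n then M a (i+1) else 0) + (if b = i+1 then M a 2 else 0) - (if b = 2+n then M a (i+1+n) else 0))"
  using assms
  unfolding ad_def msub_def mmul_def XX_def madd_def Xsum_def Xdiff_def msub_def
  by (simp only: distrib_right left_diff_distrib distrib_left right_diff_distrib sum.distrib sum_subtractf sum_E_l sum_E_r, simp add: ac_simps)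



definition FF :: "nat \<Rightarrow> nat \<Rightarrow> cmat \<Rightarrow> cmat" where
  "FF n i Y = ad n (XX n i) (ad n (XX n i) Y)"

lemma F1: assumes "2 \<le> i" "i + 1 \<le> n"
  shows "FF n i (Eunit (1+n) 1) a b = Xdiff n 2 1 a b - 2 * Eunit (i+1) (i+1+n) a b"
  using assms unfolding FF_def
  apply (simp only: adX_pt[OF _ assms(2)])
  apply (simp add: Xdiff_def Eunit_def msub_def)
  done

lemma F2: assumes "2 \<le> i" "i + 1 \<le> n"
  shows "FF n i (Eunit (2+n) 2) a b = - Xdiff n 1 2 a b + 2 * Eunit (i+1+n) (i+1) a b"
  using assms unfolding FF_def
  apply (simp only: adX_pt[OF _ assms(2)])
  apply (simp add: Xdiff_def Eunit_def msub_def)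
  done

lemma F3: assumes "2 \<le> i" "i + 1 \<le> n" "3 \<le> j" "j \<le> i"
  shows "FF n i (Eunit (j+n) j) a b = 0"
  using assms unfolding FF_def
  apply (simp only: adX_pt[OF _ assms(2)])
  apply (simp add: Eunit_def)
  done

lemma N12: assumes "2 \<le> i" "i + 1 \<le> n"
  shows "FF n i (Xnegsum n 1 2) a b = - Eunit 1 1 a b + Eunit 2 2 a b + Eunit (1+n) (1+n) a b - Eunit (2+n) (2+n) a b
     - 2 * Eunit (i+1) (i+1) a b + 2 * Eunit (i+1+n) (i+1+n) a b"
  using assms unfolding FF_def
  apply (simp only: adX_pt[OF _ assms(2)])
  apply (simp add: Xnegsum_def Eunit_def madd_def)
  done

lemma N1k: assumes "2 \<le> i" "i + 1 \<le> n" "3 \<le> k" "k \<le> i"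
  shows "FF n i (Xnegsum n 1 k) a b = Xdiff n 2 k a b"
  using assms unfolding FF_def
  apply (simp only: adX_pt[OF _ assms(2)])
  apply (simp add: Xnegsum_def Xdiff_def Eunit_def madd_def msub_def)
  done

lemma N2k: assumes "2 \<le> i" "i + 1 \<le> n" "3 \<le> k" "k \<le> i"
  shows "FF n i (Xnegsum n 2 k) a b = - Xdiff n 1 k a b"
  using assms unfolding FF_def
  apply (simp only: adX_pt[OF _ assms(2)])
  apply (simp add: Xnegsum_def Xdiff_def Eunit_def madd_def msub_def)
  done

lemma Njk: assumes "2 \<le> i" "i + 1 \<le> n" "3 \<le> j" "j < k" "k \<le> i"
  shows "FF n i (Xnegsum n j k) a b = 0"
  using assms unfolding FF_def
  apply (simp only: adX_pt[OF _ assms(2)])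
  apply (simp add: Xnegsum_def Eunit_def madd_def)
  done



lemma pr_simple: assumes "(\<Sum>t\<in>{1..i}. M t t) = 0"
  shows "pr_lgamma n i M a b = (if (a \<in> {1..i} \<and> b \<in> {1..i}) \<or> (a \<in> {n+1..n+i} \<and> b \<in> {n+1..n+i}) then M a b else 0)"
proof -
  have "(\<Sum>j\<in>{1..i}. M j j) / of_nat i = 0" using assms by simp
  then show ?thesis unfolding pr_lgamma_def Let_def by (simp only: diff_zero add_0_right if_cancel split: if_split) auto
qed

definition GG :: "nat \<Rightarrow> nat \<Rightarrow> cmat \<Rightarrow> cmat" where
  "GG n i Y = pr_lgamma n i (FF n i Y)"

definition HH :: "nat \<Rightarrow> cmat" where
  "HH n = (\<lambda>a b. - Eunit 1 1 a b + Eunit 2 2 a b + Eunit (1+n) (1+n) a b - Eunit (2+n) (2+n) a b)"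

lemma G1: assumes "2 \<le> i" "i + 1 \<le> n"
  shows "GG n i (Eunit (1+n) 1) a b = Xdiff n 2 1 a b"
proof -
  have "(\<Sum>t\<in>{1..i}. FF n i (Eunit (1+n) 1) t t) = 0"
    using assms by (intro sum.neutral ballI, simp only: F1[OF assms], simp add: Xdiff_def Eunit_def msub_def)
  then show ?thesis unfolding GG_def using assms
    by (simp only: pr_simple F1[OF assms], simp add: Xdiff_def Eunit_def msub_def)
qed

lemma G2: assumes "2 \<le> i" "i + 1 \<le> n"
  shows "GG n i (Eunit (2+n) 2) a b = - Xdiff n 1 2 a b"
proof -
  have "(\<Sum>t\<in>{1..i}. FF n i (Eunit (2+n) 2) t t) = 0"
    using assms by (intro sum.neutral ballI, simp only: F2[OF assms], simp add: Xdiff_def Eunit_def msub_def)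
  then show ?thesis unfolding GG_def using assms
    by (simp only: pr_simple F2[OF assms], simp add: Xdiff_def Eunit_def msub_def)
qed

lemma G3: assumes "2 \<le> i" "i + 1 \<le> n" "3 \<le> j" "j \<le> i"
  shows "GG n i (Eunit (j+n) j) a b = 0"
proof -
  have "(\<Sum>t\<in>{1..i}. FF n i (Eunit (j+n) j) t t) = 0"
    using assms by (intro sum.neutral ballI, simp only: F3[OF assms])
  then show ?thesis unfolding GG_def using assms
    by (simp only: pr_simple F3[OF assms], simp)
qed

lemma GN12: assumes "2 \<le> i" "i + 1 \<le> n"
  shows "GG n i (Xnegsum n 1 2) a b = HH n a b"
proof -
  have "(\<Sum>t\<in>{1..i}. FF n i (Xnegsum n 1 2) t t) = (\<Sum>t\<in>{1..i}. (if t = 2 then 1 else 0) - (if t = 1 then 1 else 0))"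
    using assms by (intro sum.cong refl, simp only: N12[OF assms], simp add: Eunit_def)
  also have "\<dots> = 0" using assms by (simp add: sum_subtractf)
  finally have z: "(\<Sum>t\<in>{1..i}. FF n i (Xnegsum n 1 2) t t) = 0" .
  show ?thesis unfolding GG_def using assms
    by (simp only: pr_simple[where M="FF n i (Xnegsum n 1 2)", OF z] N12[OF assms], simp add: HH_def Eunit_def)
qed

lemma GN1k: assumes "2 \<le> i" "i + 1 \<le> n" "3 \<le> k" "k \<le> i"
  shows "GG n i (Xnegsum n 1 k) a b = Xdiff n 2 k a b"
proof -
  have "(\<Sum>t\<in>{1..i}. FF n i (Xnegsum n 1 k) t t) = 0"
    using assms by (intro sum.neutral ballI, simp only: N1k[OF assms], simp add: Xdiff_def Eunit_def msub_def)
  then show ?thesis unfolding GG_def using assms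
    by (simp only: pr_simple N1k[OF assms], simp add: Xdiff_def Eunit_def msub_def)
qed

lemma GN2k: assumes "2 \<le> i" "i + 1 \<le> n" "3 \<le> k" "k \<le> i"
  shows "GG n i (Xnegsum n 2 k) a b = - Xdiff n 1 k a b"
proof -
  have "(\<Sum>t\<in>{1..i}. FF n i (Xnegsum n 2 k) t t) = 0"
    using assms by (intro sum.neutral ballI, simp only: N2k[OF assms], simp add: Xdiff_def Eunit_def msub_def)
  then show ?thesis unfolding GG_def using assms
    by (simp only: pr_simple N2k[OF assms], simp add: Xdiff_def Eunit_def msub_def)
qed

lemma GNjk: assumes "2 \<le> i" "i + 1 \<le> n" "3 \<le> j" "j < k" "k \<le> i"
  shows "GG n i (Xnegsum n j k) a b = 0"
proof -
  have "(\<Sum>t\<in>{1..i}. FF n i (Xnegsum n j k) t t) = 0"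
    using assms by (intro sum.neutral ballI, simp only: Njk[OF assms])
  then show ?thesis unfolding GG_def using assms
    by (simp only: pr_simple Njk[OF assms], simp)
qed



lemma supp_XX: "1 \<le> i \<Longrightarrow> i + 1 \<le> n \<Longrightarrow> supp n (XX n i)"
  unfolding supp_def XX_def madd_def Xsum_def Xdiff_def msub_def Eunit_def by auto

lemma supp_FF: "1 \<le> i \<Longrightarrow> i + 1 \<le> n \<Longrightarrow> supp n M \<Longrightarrow> supp n (FF n i M)"
  unfolding FF_def by (intro supp_ad supp_XX)

lemma lin_FF: "1 \<le> i \<Longrightarrow> i + 1 \<le> n \<Longrightarrow> lin n (FF n i)"
proof -
  assume h0: "1 \<le> i" and h: "i + 1 \<le> n"
  have "lin n (\<lambda>M. ad n (XX n i) (ad n (XX n i) M))"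
    by (rule lin_comp[OF lin_ad lin_ad supp_ad[OF supp_XX[OF h0 h]]])
  moreover have "FF n i = (\<lambda>M. ad n (XX n i) (ad n (XX n i) M))" by (rule ext, simp add: FF_def)
  ultimately show ?thesis by simp
qed

lemma lin_GG: "1 \<le> i \<Longrightarrow> i + 1 \<le> n \<Longrightarrow> lin n (GG n i)"
proof -
  assume h0: "1 \<le> i" and h: "i + 1 \<le> n"
  have "lin n (\<lambda>M. pr_lgamma n i (FF n i M))"
    by (rule lin_comp[OF lin_pr lin_FF[OF h0 h] supp_FF[OF h0 h]]) (use h in simp)
  moreover have "GG n i = (\<lambda>M. pr_lgamma n i (FF n i M))" by (rule ext, simp add: GG_def)
  ultimately show ?thesis by simp
qed

lemma supp_Xneg2eps: "1 \<le> j \<Longrightarrow> j \<le> n \<Longrightarrow> supp n (Xneg2eps n j)"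
  unfolding supp_def Xneg2eps_def Eunit_def by auto

lemma supp_Xnegsum: "1 \<le> j \<Longrightarrow> j \<le> n \<Longrightarrow> 1 \<le> k \<Longrightarrow> k \<le> n \<Longrightarrow> supp n (Xnegsum n j k)"
  unfolding supp_def Xnegsum_def madd_def Eunit_def by auto

lemma v_formula:
  assumes "1 \<le> i" "i + 1 \<le> n"
  shows "pr_tens n i (tau2 n i c0 (XX n i)) = (\<lambda>a b c d.
     1/2 * ((1 / complex_of_real c0) * (\<Sum>j\<in>{1..i}. tens (GG n i (Xneg2eps n j)) (X2eps n j) a b c d)
    + (1 / (2 * complex_of_real c0)) * (\<Sum>j\<in>{1..i}. \<Sum>k\<in>{j<..i}. tens (GG n i (Xnegsum n j k)) (Xsum n j k) a b c d)))"
proof -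
  have t: "tau2 n i c0 (XX n i) = (\<lambda>a b c d. 1/2 * map_left n (FF n i) (omega n i c0) a b c d)"
  proof -
    have "FF n i = (\<lambda>Y. ad n (XX n i) (ad n (XX n i) Y))" by (rule ext, simp add: FF_def)
    then show ?thesis unfolding tau2_def by simp
  qed
  have c: "map_left n (pr_lgamma n i) (map_left n (FF n i) T) = map_left n (GG n i) T" for T
  proof -
    have "map_left n (pr_lgamma n i) (map_left n (FF n i) T) = map_left n (\<lambda>M. pr_lgamma n i (FF n i M)) T"
      apply (rule ml_comp)
      using assms apply (simp add: lin_pr)
      apply (rule supp_FF[OF assms])
      by (rule supp_E)
    moreover have "GG n i = (\<lambda>M. pr_lgamma n i (FF n i M))" by (rule ext, simp add: GG_def)
    ultimately show ?thesis by simp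
  qed
  have s1: "map_left n (GG n i) (tens (Xneg2eps n j) (X2eps n j)) = tens (GG n i (Xneg2eps n j)) (X2eps n j)"
    if "j \<in> {1..i}" for j
    using that assms by (intro map_left_tens lin_GG supp_Xneg2eps) auto
  have s2: "map_left n (GG n i) (tens (Xnegsum n j k) (Xsum n j k)) = tens (GG n i (Xnegsum n j k)) (Xsum n j k)"
    if "j \<in> {1..i}" "k \<in> {j<..i}" for j k
    using that assms by (intro map_left_tens lin_GG supp_Xnegsum) auto
  show ?thesis
    unfolding pr_tens_def t ml_smult c omega_def ml_add ml_sum
    by (intro ext, simp only: s1 s2 cong: sum.cong)
qed

definition VV :: "nat \<Rightarrow> nat \<Rightarrow> ctens" where
  "VV n i = (\<lambda>a b c d. 1/2 * (tens (Xdiff n 2 1) (X2eps n 1) a b c d - tens (Xdiff n 1 2) (X2eps n 2) a b c d)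
     + 1/4 * (tens (HH n) (Xsum n 1 2) a b c d
       + (\<Sum>k\<in>{3..i}. tens (Xdiff n 2 k) (Xsum n 1 k) a b c d - tens (Xdiff n 1 k) (Xsum n 2 k) a b c d)))"

lemma split12: "2 \<le> i \<Longrightarrow> {1..i} = insert 1 (insert 2 {3..(i::nat)})" by auto
lemma split1: "2 \<le> i \<Longrightarrow> {1<..i} = insert 2 {3..(i::nat)}" by auto
lemma split2: "{2<..i} = {3..(i::nat)}" by auto

lemma sum12: "2 \<le> (i::nat) \<Longrightarrow> (\<Sum>j\<in>{1..i}. f j) = f 1 + (f 2 + (\<Sum>j\<in>{3..i}. (f j::complex)))"
  unfolding split12 by simp

lemma sum_ins2: "(\<Sum>k\<in>insert 2 {3..(i::nat)}. f k) = f 2 + (\<Sum>k\<in>{3..i}. (f k::complex))"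
  by simp

lemma v_eq:
  assumes "2 \<le> i" "i + 1 \<le> n" and c0: "0 < c0"
  shows "pr_tens n i (tau2 n i c0 (XX n i)) = (\<lambda>a b c d. (1 / complex_of_real c0) * VV n i a b c d)"
proof (rule ext)+
  fix a b c d
  have e1: "(\<Sum>j\<in>{1..i}. tens (GG n i (Xneg2eps n j)) (X2eps n j) a b c d)
     = tens (Xdiff n 2 1) (X2eps n 1) a b c d - tens (Xdiff n 1 2) (X2eps n 2) a b c d"
  proof -
    have z: "(\<Sum>j\<in>{3..i}. tens (GG n i (Xneg2eps n j)) (X2eps n j) a b c d) = 0"
      using assms by (intro sum.neutral ballI) (simp add: tens_def Xneg2eps_def G3)
    show ?thesis
      unfolding sum12[OF assms(1)] z
      by (simp only: tens_def Xneg2eps_def G1[OF assms(1,2)] G2[OF assms(1,2)], simp)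
  qed
  have e2: "(\<Sum>j\<in>{1..i}. \<Sum>k\<in>{j<..i}. tens (GG n i (Xnegsum n j k)) (Xsum n j k) a b c d)
     = tens (HH n) (Xsum n 1 2) a b c d
       + (\<Sum>k\<in>{3..i}. tens (Xdiff n 2 k) (Xsum n 1 k) a b c d - tens (Xdiff n 1 k) (Xsum n 2 k) a b c d)"
  proof -
    have z: "(\<Sum>j\<in>{3..i}. \<Sum>k\<in>{j<..i}. tens (GG n i (Xnegsum n j k)) (Xsum n j k) a b c d) = 0"
      using assms by (intro sum.neutral ballI) (simp add: tens_def GNjk)
    have k1: "(\<Sum>k\<in>{3..i}. tens (GG n i (Xnegsum n 1 k)) (Xsum n 1 k) a b c d) = (\<Sum>k\<in>{3..i}. tens (Xdiff n 2 k) (Xsum n 1 k) a b c d)"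
      apply (intro sum.cong refl)
      subgoal for k using assms GN1k[of i n k a b] by (simp add: tens_def)
      done
    have k2: "(\<Sum>k\<in>{3..i}. tens (GG n i (Xnegsum n 2 k)) (Xsum n 2 k) a b c d) = - (\<Sum>k\<in>{3..i}. tens (Xdiff n 1 k) (Xsum n 2 k) a b c d)"
      unfolding sum_negf[symmetric]
      apply (intro sum.cong refl)
      subgoal for k using assms GN2k[of i n k a b] by (simp add: tens_def)
      done
    have h12: "tens (GG n i (Xnegsum n 1 2)) (Xsum n 1 2) a b c d = tens (HH n) (Xsum n 1 2) a b c d"
      using assms GN12[of i n a b] by (simp add: tens_def)
    show ?thesis
      unfolding sum12[OF assms(1)] z split1[OF assms(1)] split2 sum_ins2 k1 k2 h12
      by (simp add: sum_subtractf)
  qed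
  show "pr_tens n i (tau2 n i c0 (XX n i)) a b c d = (1 / complex_of_real c0) * VV n i a b c d"
  proof -
    have vf: "pr_tens n i (tau2 n i c0 (XX n i)) = (\<lambda>a b c d.
     1/2 * ((1 / complex_of_real c0) * (\<Sum>j\<in>{1..i}. tens (GG n i (Xneg2eps n j)) (X2eps n j) a b c d)
    + (1 / (2 * complex_of_real c0)) * (\<Sum>j\<in>{1..i}. \<Sum>k\<in>{j<..i}. tens (GG n i (Xnegsum n j k)) (Xsum n j k) a b c d)))"
      using assms by (intro v_formula) auto
    have "complex_of_real c0 \<noteq> 0" using c0 by simp
    then show ?thesis unfolding vf e1 e2 VV_def by (simp add: field_simps)
  qed
qed



lemma supp_Xdiff: "p \<in> {1..n} \<Longrightarrow> q \<in> {1..n} \<Longrightarrow> supp n (Xdiff n p q)"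
  unfolding supp_def Xdiff_def msub_def Eunit_def by auto
lemma supp_Xsum: "p \<in> {1..n} \<Longrightarrow> q \<in> {1..n} \<Longrightarrow> supp n (Xsum n p q)"
  unfolding supp_def Xsum_def madd_def Eunit_def by auto
lemma supp_X2eps: "p \<in> {1..n} \<Longrightarrow> supp n (X2eps n p)"
  unfolding supp_def X2eps_def Eunit_def by auto
lemma supp_HH: "2 \<le> n \<Longrightarrow> supp n (HH n)"
  unfolding supp_def HH_def Eunit_def by auto

lemma map_right_tens:
  assumes "lin n f" "supp n B"
  shows "map_right n f (tens A B) = tens A (f B)"
proof -
  have "f B = (\<lambda>a b. \<Sum>p\<in>RR n. \<Sum>q\<in>RR n. B p q * f (Eunit p q) a b)" using assms unfolding lin_def by blast
  then show ?thesis unfolding map_right_def tens_def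
    by (simp add: sum_distrib_left mult_ac)
qed

lemma lact_tens: "supp n A \<Longrightarrow> supp n B \<Longrightarrow>
  lact n Y (tens A B) = (\<lambda>a b c d. tens (ad n Y A) B a b c d + tens A (ad n Y B) a b c d)"
  unfolding lact_def by (simp add: map_left_tens[OF lin_ad] map_right_tens[OF lin_ad])

lemma la_add: "lact n Y (\<lambda>a b c d. S a b c d + T a b c d) = (\<lambda>a b c d. lact n Y S a b c d + lact n Y T a b c d)"
  unfolding lact_def map_left_def map_right_def by (simp add: distrib_right sum.distrib algebra_simps)

lemma la_diff: "lact n Y (\<lambda>a b c d. S a b c d - T a b c d) = (\<lambda>a b c d. lact n Y S a b c d - lact n Y T a b c d)"
  unfolding lact_def map_left_def map_right_def by (simp add: left_diff_distrib sum_subtractf algebra_simps)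

lemma la_smult: "lact n Y (\<lambda>a b c d. k * S a b c d) = (\<lambda>a b c d. k * lact n Y S a b c d)"
  unfolding lact_def map_left_def map_right_def by (simp add: sum_distrib_left algebra_simps)

lemma mr_sum: "map_right n f (\<lambda>a b c d. \<Sum>j\<in>J. S j a b c d) = (\<lambda>a b c d. \<Sum>j\<in>J. map_right n f (S j) a b c d)"
proof (intro ext)
  fix a b c d
  have "map_right n f (\<lambda>a b c d. \<Sum>j\<in>J. S j a b c d) a b c d = (\<Sum>p\<in>RR n. \<Sum>q\<in>RR n. \<Sum>j\<in>J. S j a b p q * f (Eunit p q) c d)"
    by (simp add: map_right_def sum_distrib_right)
  also have "\<dots> = (\<Sum>p\<in>RR n. \<Sum>j\<in>J. \<Sum>q\<in>RR n. S j a b p q * f (Eunit p q) c d)"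
    by (rule sum.cong[OF refl], rule sum.swap)
  also have "\<dots> = (\<Sum>j\<in>J. \<Sum>p\<in>RR n. \<Sum>q\<in>RR n. S j a b p q * f (Eunit p q) c d)"
    by (rule sum.swap)
  finally show "map_right n f (\<lambda>a b c d. \<Sum>j\<in>J. S j a b c d) a b c d = (\<Sum>j\<in>J. map_right n f (S j) a b c d)"
    by (simp add: map_right_def)
qed

lemma la_sum: "lact n Y (\<lambda>a b c d. \<Sum>j\<in>J. S j a b c d) = (\<lambda>a b c d. \<Sum>j\<in>J. lact n Y (S j) a b c d)"
  unfolding lact_def ml_sum mr_sum by (simp add: sum.distrib)

lemma adXd_pt: "p \<in> {1..n} \<Longrightarrow> q \<in> {1..n} \<Longrightarrow> ad n (Xdiff n p q) M a b =
   (if a = p then M q b else 0) - (if a = q + n then M (p+n) b else 0) - (if b = q then M a p else 0) + (if b = p + n then M a (q+n) else 0)"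
  unfolding ad_def msub_def mmul_def Xdiff_def
  by (simp only: left_diff_distrib right_diff_distrib sum_subtractf sum_E_l sum_E_r) (auto simp: algebra_simps)

lemma adE_pt: "p \<in> RR n \<Longrightarrow> q \<in> RR n \<Longrightarrow> ad n (Eunit p q) M a b =
   (if a = p then M q b else 0) - (if b = q then M a p else 0)"
  unfolding ad_def msub_def mmul_def
  by (simp only: sum_E_l sum_E_r) (auto simp: algebra_simps)

lemma br_dd: "p \<in> {1..n} \<Longrightarrow> q \<in> {1..n} \<Longrightarrow> r \<in> {1..n} \<Longrightarrow> s \<in> {1..n} \<Longrightarrow>
  ad n (Xdiff n p q) (Xdiff n r s) a b = (if q = r then Xdiff n p s a b else 0) - (if s = p then Xdiff n r q a b else 0)"
  by (simp only: adXd_pt) (auto simp: Xdiff_def msub_def Eunit_def)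

lemma br_ds: "p \<in> {1..n} \<Longrightarrow> q \<in> {1..n} \<Longrightarrow> r \<in> {1..n} \<Longrightarrow> s \<in> {1..n} \<Longrightarrow>
  ad n (Xdiff n p q) (Xsum n r s) a b = (if q = r then Xsum n p s a b else 0) + (if q = s then Xsum n r p a b else 0)"
  by (simp only: adXd_pt) (auto simp: Xsum_def madd_def Eunit_def)

lemma br_d2: "p \<in> {1..n} \<Longrightarrow> q \<in> {1..n} \<Longrightarrow> r \<in> {1..n} \<Longrightarrow>
  ad n (Xdiff n p q) (X2eps n r) a b = (if q = r then Xsum n p q a b else 0)"
  by (simp only: adXd_pt) (auto simp: Xsum_def X2eps_def madd_def Eunit_def)

lemma br_dH: "p \<in> {1..n} \<Longrightarrow> q \<in> {1..n} \<Longrightarrow>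
  ad n (Xdiff n p q) (HH n) a b = ((if p = 1 then 1 else 0) - (if q = 1 then 1 else 0) - (if p = 2 then 1 else 0) + (if q = 2 then 1 else 0)) * Xdiff n p q a b"
  by (simp only: adXd_pt) (auto simp: HH_def Xdiff_def msub_def Eunit_def)



lemma lact_VV:
  assumes "2 \<le> i" "i + 1 \<le> n"
  shows "lact n Y (VV n i) = (\<lambda>a b c d.
   1/2 * ((ad n Y (Xdiff n 2 1) a b * X2eps n 1 c d + Xdiff n 2 1 a b * ad n Y (X2eps n 1) c d)
        - (ad n Y (Xdiff n 1 2) a b * X2eps n 2 c d + Xdiff n 1 2 a b * ad n Y (X2eps n 2) c d))
 + 1/4 * ((ad n Y (HH n) a b * Xsum n 1 2 c d + HH n a b * ad n Y (Xsum n 1 2) c d)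
   + (\<Sum>k\<in>{3..i}. (ad n Y (Xdiff n 2 k) a b * Xsum n 1 k c d + Xdiff n 2 k a b * ad n Y (Xsum n 1 k) c d)
                  - (ad n Y (Xdiff n 1 k) a b * Xsum n 2 k c d + Xdiff n 1 k a b * ad n Y (Xsum n 2 k) c d))))"
proof -
  have r1: "1 \<in> {1..n}" "2 \<in> {1..n}" using assms by auto
  have t1: "lact n Y (tens (Xdiff n 2 1) (X2eps n 1)) = (\<lambda>a b c d. tens (ad n Y (Xdiff n 2 1)) (X2eps n 1) a b c d + tens (Xdiff n 2 1) (ad n Y (X2eps n 1)) a b c d)"
    using r1 by (intro lact_tens supp_Xdiff supp_X2eps)
  have t2: "lact n Y (tens (Xdiff n 1 2) (X2eps n 2)) = (\<lambda>a b c d. tens (ad n Y (Xdiff n 1 2)) (X2eps n 2) a b c d + tens (Xdiff n 1 2) (ad n Y (X2eps n 2)) a b c d)"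
    using r1 by (intro lact_tens supp_Xdiff supp_X2eps)
  have t3: "lact n Y (tens (HH n) (Xsum n 1 2)) = (\<lambda>a b c d. tens (ad n Y (HH n)) (Xsum n 1 2) a b c d + tens (HH n) (ad n Y (Xsum n 1 2)) a b c d)"
    using r1 assms by (intro lact_tens supp_HH supp_Xsum) auto
  have t4: "k \<in> {3..i} \<Longrightarrow> lact n Y (tens (Xdiff n 2 k) (Xsum n 1 k)) = (\<lambda>a b c d. tens (ad n Y (Xdiff n 2 k)) (Xsum n 1 k) a b c d + tens (Xdiff n 2 k) (ad n Y (Xsum n 1 k)) a b c d)" for k
    using r1 assms by (intro lact_tens supp_Xsum supp_Xdiff) auto
  have t5: "k \<in> {3..i} \<Longrightarrow> lact n Y (tens (Xdiff n 1 k) (Xsum n 2 k)) = (\<lambda>a b c d. tens (ad n Y (Xdiff n 1 k)) (Xsum n 2 k) a b c d + tens (Xdiff n 1 k) (ad n Y (Xsum n 2 k)) a b c d)" for k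
    using r1 assms by (intro lact_tens supp_Xsum supp_Xdiff) auto
  show ?thesis
    unfolding VV_def la_add la_smult la_diff la_sum
    apply (simp only: t1 t2 t3 t4 t5 cong: sum.cong)
    apply (simp only: tens_def)
    done
qed

lemma HH_alt: "HH n a b = Xdiff n 2 2 a b - Xdiff n 1 1 a b"
  unfolding HH_def Xdiff_def msub_def by (simp add: algebra_simps)
lemma Xsum_same: "Xsum n p p a b = 2 * X2eps n p a b"
  unfolding Xsum_def X2eps_def madd_def by simp
lemma Xsum_comm: "Xsum n q p a b = Xsum n p q a b"
  unfolding Xsum_def madd_def by simp

lemma case1:
  assumes "2 \<le> i" "i + 1 \<le> n"
  shows "lact n (Xdiff n 1 2) (VV n i) = (\<lambda>_ _ _ _. 0)"
proof (intro ext)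
  fix a b c d
  have r: "1 \<in> {1..n}" "2 \<in> {1..n}" using assms by auto
  have k: "\<And>k. k \<in> {3..i} \<Longrightarrow> k \<in> {1..n}" using assms by auto
  have kne: "\<And>k. k \<in> {3..i} \<Longrightarrow> (k = 1) = False" "\<And>k. k \<in> {3..i} \<Longrightarrow> (k = 2) = False"
     "\<And>k. k \<in> {3..i} \<Longrightarrow> (1 = k) = False" "\<And>k. k \<in> {3..i} \<Longrightarrow> (2 = k) = False" by auto
  have "lact n (Xdiff n 1 2) (VV n i) a b c d =
   1/2 * (((Xdiff n 1 1 a b - Xdiff n 2 2 a b) * X2eps n 1 c d)
        - (Xdiff n 1 2 a b * Xsum n 1 2 c d))
 + 1/4 * ((2 * Xdiff n 1 2 a b) * Xsum n 1 2 c d + HH n a b * (2 * X2eps n 1 c d)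
   + (\<Sum>k\<in>{3..i}. (Xdiff n 1 k a b * Xsum n 1 k c d) - (Xdiff n 1 k a b * Xsum n 1 k c d)))"
    unfolding lact_VV[OF assms]
    apply (simp only: br_dd br_ds br_d2 br_dH r k kne if_False cong: sum.cong)
    apply (simp add: Xsum_same Xsum_comm cong: sum.cong)
    done
  also have "\<dots> = 0" by (simp add: HH_alt algebra_simps)
  finally show "lact n (Xdiff n 1 2) (VV n i) a b c d = 0" .
qed

lemma case2:
  assumes "3 \<le> i" "i + 1 \<le> n"
  shows "lact n (Xdiff n 2 3) (VV n i) = (\<lambda>_ _ _ _. 0)"
proof (intro ext)
  fix a b c d
  have a2: "2 \<le> i" using assms by simp
  have r: "1 \<in> {1..n}" "2 \<in> {1..n}" "3 \<in> {1..n}" using assms by auto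
  have k: "\<And>k. k \<in> {3..i} \<Longrightarrow> k \<in> {1..n}" using assms by auto
  have kne: "\<And>k. k \<in> {3..i} \<Longrightarrow> (k = 1) = False" "\<And>k. k \<in> {3..i} \<Longrightarrow> (k = 2) = False"
     "\<And>k. k \<in> {3..i} \<Longrightarrow> (1 = k) = False" "\<And>k. k \<in> {3..i} \<Longrightarrow> (2 = k) = False" by auto
  have m: "3 \<in> {3..i}" using assms by simp
  show "lact n (Xdiff n 2 3) (VV n i) a b c d = 0"
    unfolding lact_VV[OF a2 assms(2)]
    apply (simp only: br_dd br_ds br_d2 br_dH r k kne if_False cong: sum.cong)
    apply (simp add: Xsum_same Xsum_comm sum.distrib sum_subtractf mult_if_r mult_if_l sum.delta sum.delta' m assms algebra_simps)
    done
qed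

lemma caseA:
  assumes "2 \<le> i" "i + 1 \<le> n" "3 \<le> j" "j + 1 \<le> i"
  shows "lact n (Xdiff n j (j+1)) (VV n i) = (\<lambda>_ _ _ _. 0)"
proof (intro ext)
  fix a b c d
  have r: "1 \<in> {1..n}" "2 \<in> {1..n}" "j \<in> {1..n}" "j+1 \<in> {1..n}" using assms by auto
  have k: "\<And>k. k \<in> {3..i} \<Longrightarrow> k \<in> {1..n}" using assms by auto
  have kne: "\<And>k. k \<in> {3..i} \<Longrightarrow> (k = 1) = False" "\<And>k. k \<in> {3..i} \<Longrightarrow> (k = 2) = False"
     "\<And>k. k \<in> {3..i} \<Longrightarrow> (1 = k) = False" "\<And>k. k \<in> {3..i} \<Longrightarrow> (2 = k) = False" by auto
  have jne: "(j = 1) = False" "(j = 2) = False" "(1 = j) = False" "(2 = j) = False"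
    "(j + 1 = 1) = False" "(j+1 = 2) = False" "(1 = j + 1) = False" "(2 = j + 1) = False" using assms by auto
  have m: "j \<in> {3..i}" "j + 1 \<in> {3..i}" using assms by auto
  show "lact n (Xdiff n j (j+1)) (VV n i) a b c d = 0"
    unfolding lact_VV[OF assms(1,2)]
    apply (simp only: br_dd br_ds br_d2 br_dH r k kne jne if_False cong: sum.cong)
    apply (simp add: Xsum_same Xsum_comm sum.distrib sum_subtractf mult_if_r mult_if_l sum.delta sum.delta' m assms algebra_simps)
    apply (use assms in auto)
    done
qed

lemma caseB:
  assumes "2 \<le> i" "i + 1 \<le> j" "j + 1 \<le> n"
  shows "lact n (Xdiff n j (j+1)) (VV n i) = (\<lambda>_ _ _ _. 0)"
proof (intro ext)
  fix a b c d
  have i1: "i + 1 \<le> n" using assms by simp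
  have r: "1 \<in> {1..n}" "2 \<in> {1..n}" "j \<in> {1..n}" "j+1 \<in> {1..n}" using assms by auto
  have k: "\<And>k. k \<in> {3..i} \<Longrightarrow> k \<in> {1..n}" using assms by auto
  have kne: "\<And>k. k \<in> {3..i} \<Longrightarrow> (k = 1) = False" "\<And>k. k \<in> {3..i} \<Longrightarrow> (k = 2) = False"
     "\<And>k. k \<in> {3..i} \<Longrightarrow> (1 = k) = False" "\<And>k. k \<in> {3..i} \<Longrightarrow> (2 = k) = False"
     "\<And>k. k \<in> {3..i} \<Longrightarrow> (k = j) = False" "\<And>k. k \<in> {3..i} \<Longrightarrow> (j + 1 = k) = False"
     "\<And>k. k \<in> {3..i} \<Longrightarrow> (j = k) = False" "\<And>k. k \<in> {3..i} \<Longrightarrow> (k = j + 1) = False"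
    using assms by auto
  have jne: "(j = 1) = False" "(j = 2) = False" "(1 = j) = False" "(2 = j) = False"
    "(j + 1 = 1) = False" "(j+1 = 2) = False" "(1 = j + 1) = False" "(2 = j + 1) = False" using assms by auto
  show "lact n (Xdiff n j (j+1)) (VV n i) a b c d = 0"
    unfolding lact_VV[OF assms(1) i1]
    apply (simp only: br_dd br_ds br_d2 br_dH r k kne jne if_False cong: sum.cong)
    apply (simp add: algebra_simps)
    done
qed

lemma X2eps_E: "X2eps n n = Eunit n (n+n)" unfolding X2eps_def ..

lemma caseN:
  assumes "2 \<le> i" "i + 1 \<le> n"
  shows "lact n (X2eps n n) (VV n i) = (\<lambda>_ _ _ _. 0)"
proof (intro ext)
  fix a b c d
  have e: "n \<in> RR n" "n + n \<in> RR n" using assms by auto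
  have b1: "ad n (X2eps n n) (Xdiff n p q) a b = 0" if "p \<in> {1..n}" "q \<in> {1..n}" "q \<noteq> n" for p q a b
    using that unfolding X2eps_E adE_pt[OF e] by (auto simp: Xdiff_def msub_def Eunit_def)
  have b2: "ad n (X2eps n n) (Xsum n p q) a b = 0" if "p \<in> {1..n}" "q \<in> {1..n}" for p q a b
    using that unfolding X2eps_E adE_pt[OF e] by (auto simp: Xsum_def madd_def Eunit_def)
  have b3: "ad n (X2eps n n) (X2eps n p) a b = 0" if "p \<in> {1..n}" for p a b
    using that unfolding X2eps_E adE_pt[OF e] by (auto simp: X2eps_def Eunit_def)
  have b4: "ad n (X2eps n n) (HH n) a b = 0" for a b
    using assms unfolding X2eps_E adE_pt[OF e] by (auto simp: HH_def Eunit_def)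
  have r: "1 \<in> {1..n}" "2 \<in> {1..n}" using assms by auto
  have k: "\<And>k. k \<in> {3..i} \<Longrightarrow> k \<in> {1..n}" using assms by auto
  have kn: "\<And>k. k \<in> {3..i} \<Longrightarrow> k \<noteq> n" using assms by auto
  have nn: "(1::nat) \<noteq> n" "(2::nat) \<noteq> n" using assms by auto
  show "lact n (X2eps n n) (VV n i) a b c d = 0"
    unfolding lact_VV[OF assms]
    apply (simp only: b1 b2 b3 b4 r k kn nn not_False_eq_True cong: sum.cong)
    apply simp
    done
qed



lemma adH_pt: assumes "supp n M"
  shows "ad n (Hcart n h) M a b = (Hcart n h a a - Hcart n h b b) * M a b"
proof -
  have H: "Hcart n h x y = (if y = x then Hcart n h x x else 0)" for x y
    unfolding Hcart_def by auto
  have s1: "(\<Sum>c\<in>RR n. Hcart n h a c * M c b) = Hcart n h a a * M a b"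
  proof (cases "a \<in> RR n")
    case True then show ?thesis by (subst H) (simp add: mult_if_l sum.delta)
  next
    case False then show ?thesis using supp_D[OF assms] by (subst H) (auto simp: mult_if_l sum.delta)
  qed
  have s2: "(\<Sum>c\<in>RR n. M a c * Hcart n h c b) = M a b * Hcart n h b b"
  proof (cases "b \<in> RR n")
    case True then show ?thesis by (subst H) (simp add: mult_if_r sum.delta' del: atLeastAtMost_iff)
  next
    case False then show ?thesis using supp_D[OF assms] by (subst H) (auto simp: mult_if_r sum.delta' simp del: atLeastAtMost_iff)
  qed
  show ?thesis unfolding ad_def msub_def mmul_def s1 s2 by (simp add: algebra_simps)
qed

lemma hD: "p \<in> {1..n} \<Longrightarrow> q \<in> {1..n} \<Longrightarrow> ad n (Hcart n h) (Xdiff n p q) a b = (h p - h q) * Xdiff n p q a b"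
  by (simp only: adH_pt[OF supp_Xdiff]) (auto simp: Hcart_def Xdiff_def msub_def Eunit_def)
lemma hS: "p \<in> {1..n} \<Longrightarrow> q \<in> {1..n} \<Longrightarrow> ad n (Hcart n h) (Xsum n p q) a b = (h p + h q) * Xsum n p q a b"
  by (simp only: adH_pt[OF supp_Xsum]) (auto simp: Hcart_def Xsum_def madd_def Eunit_def)
lemma h2: "p \<in> {1..n} \<Longrightarrow> ad n (Hcart n h) (X2eps n p) a b = 2 * h p * X2eps n p a b"
  by (simp only: adH_pt[OF supp_X2eps]) (auto simp: Hcart_def X2eps_def Eunit_def)
lemma hH: "2 \<le> n \<Longrightarrow> ad n (Hcart n h) (HH n) a b = 0"
  by (simp only: adH_pt[OF supp_HH]) (auto simp: Hcart_def HH_def Eunit_def)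

lemma weightVV:
  assumes "2 \<le> i" "i + 1 \<le> n"
  shows "lact n (Hcart n h) (VV n i) = (\<lambda>a b c d. (h 1 + h 2) * VV n i a b c d)"
proof (intro ext)
  fix a b c d
  have r: "1 \<in> {1..n}" "2 \<in> {1..n}" using assms by auto
  have n2: "2 \<le> n" using assms by simp
  have k: "\<And>k. k \<in> {3..i} \<Longrightarrow> k \<in> {1..n}" using assms by auto
  have "lact n (Hcart n h) (VV n i) a b c d =
   1/2 * (((h 2 - h 1) * Xdiff n 2 1 a b * X2eps n 1 c d + Xdiff n 2 1 a b * (2 * h 1 * X2eps n 1 c d))
        - ((h 1 - h 2) * Xdiff n 1 2 a b * X2eps n 2 c d + Xdiff n 1 2 a b * (2 * h 2 * X2eps n 2 c d)))
 + 1/4 * ((0 * Xsum n 1 2 c d + HH n a b * ((h 1 + h 2) * Xsum n 1 2 c d))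
   + (\<Sum>k\<in>{3..i}. ((h 2 - h k) * Xdiff n 2 k a b * Xsum n 1 k c d + Xdiff n 2 k a b * ((h 1 + h k) * Xsum n 1 k c d))
                  - ((h 1 - h k) * Xdiff n 1 k a b * Xsum n 2 k c d + Xdiff n 1 k a b * ((h 2 + h k) * Xsum n 2 k c d))))"
    unfolding lact_VV[OF assms]
    by (simp only: hD hS h2 hH[OF n2] r k cong: sum.cong)
  also have "\<dots> = (h 1 + h 2) * VV n i a b c d"
  proof -
    define S where "S = (\<Sum>k\<in>{3..i}. tens (Xdiff n 2 k) (Xsum n 1 k) a b c d - tens (Xdiff n 1 k) (Xsum n 2 k) a b c d)"
    have eq: "(\<Sum>k\<in>{3..i}. ((h 2 - h k) * Xdiff n 2 k a b * Xsum n 1 k c d + Xdiff n 2 k a b * ((h 1 + h k) * Xsum n 1 k c d))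
                  - ((h 1 - h k) * Xdiff n 1 k a b * Xsum n 2 k c d + Xdiff n 1 k a b * ((h 2 + h k) * Xsum n 2 k c d)))
        = (h 1 + h 2) * (\<Sum>k\<in>{3..i}. tens (Xdiff n 2 k) (Xsum n 1 k) a b c d - tens (Xdiff n 1 k) (Xsum n 2 k) a b c d)"
      unfolding sum_distrib_left by (intro sum.cong refl) (simp add: tens_def algebra_simps)
    show ?thesis unfolding VV_def eq S_def[symmetric] by (simp add: tens_def field_simps)
  qed
  finally show "lact n (Hcart n h) (VV n i) a b c d = (h 1 + h 2) * VV n i a b c d" .
qed

lemma VV_nz:
  assumes "2 \<le> i" "i + 1 \<le> n"
  shows "VV n i 2 1 1 (1+n) = 1/2"
proof -
  have z: "(\<Sum>k\<in>{3..i}. tens (Xdiff n 2 k) (Xsum n 1 k) 2 1 1 (1+n) - tens (Xdiff n 1 k) (Xsum n 2 k) 2 1 1 (1+n)) = 0"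
    by (intro sum.neutral ballI) (auto simp: tens_def Xdiff_def msub_def Eunit_def)
  show ?thesis unfolding VV_def z by (simp add: tens_def Xdiff_def msub_def Eunit_def X2eps_def HH_def Xsum_def madd_def)
qed



theorem proposition5p3:
  fixes n i :: nat and c0 :: real
  assumes "3 \<le> n" and "2 \<le> i" and "i \<le> n - 1" and "0 < c0"
  defines "v \<equiv> pr_tens n i (tau2 n i c0 (madd (Xsum n 1 (i+1)) (Xdiff n 2 (i+1))))"
  shows "v \<noteq> (\<lambda>_ _ _ _. 0)
    \<and> (\<forall>h. lact n (Hcart n h) v = (\<lambda>a b c d. (h 1 + h 2) * v a b c d))
    \<and> (\<forall>j\<in>{1..n} - {i}. lact n (simple_rv n j) v = (\<lambda>_ _ _ _. 0))"
proof -
  have i2: "2 \<le> i" and i1: "i + 1 \<le> n" using assms by auto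
  have vv: "v = (\<lambda>a b c d. (1 / complex_of_real c0) * VV n i a b c d)"
    unfolding v_def XX_def[symmetric] by (rule v_eq[OF i2 i1 assms(4)])
  have c0: "complex_of_real c0 \<noteq> 0" using assms(4) by simp
  have P1: "v \<noteq> (\<lambda>_ _ _ _. 0)"
  proof
    assume "v = (\<lambda>_ _ _ _. 0)"
    then have "v 2 1 1 (1+n) = 0" by simp
    then show False unfolding vv VV_nz[OF i2 i1] using c0 by simp
  qed
  have P2: "\<forall>h. lact n (Hcart n h) v = (\<lambda>a b c d. (h 1 + h 2) * v a b c d)"
    unfolding vv la_smult weightVV[OF i2 i1] by (simp add: algebra_simps add_divide_distrib)
  have P3: "lact n (simple_rv n j) v = (\<lambda>_ _ _ _. 0)" if j: "j \<in> {1..n} - {i}" for j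
  proof -
    have Z: "lact n (simple_rv n j) (VV n i) = (\<lambda>_ _ _ _. 0)"
    proof (cases "j < n")
      case True
      then have sr: "simple_rv n j = Xdiff n j (j+1)" by (simp add: simple_rv_def)
      show ?thesis unfolding sr
      proof -
        consider "j = 1" | "j = 2" | "3 \<le> j \<and> j + 1 \<le> i" | "i + 1 \<le> j" using j by fastforce
        then show "lact n (Xdiff n j (j + 1)) (VV n i) = (\<lambda>_ _ _ _. 0)"
        proof cases
          case 1 show ?thesis unfolding 1 one_add_one by (rule case1[OF i2 i1])
        next
          case 2
          then have "3 \<le> i" using j i2 by auto
          then show ?thesis using case2[OF _ i1] 2 by simp
        next
          case 3 then show ?thesis using caseA[OF i2 i1] by simp
        next
          case 4 then show ?thesis using caseB[OF i2 4] True by simp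
        qed
      qed
    next
      case False
      then have "j = n" using j by auto
      then have sr: "simple_rv n j = X2eps n n" by (simp add: simple_rv_def)
      show ?thesis unfolding sr by (rule caseN[OF i2 i1])
    qed
    show ?thesis unfolding vv la_smult Z by simp
  qed
  show ?thesis using P1 P2 P3 by blast
qed


end
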